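(* Let $(X,\mathcal{O}(X))$ be a measurable space, $\mathcal{A}$ a unital $C^*$-algebra and $\mathcal{H}$ a Hilbert space. Let $\mathcal{I}:\mathcal{O}(X)\to CP(\mathcal{A},\mathcal{B}(\mathcal{H}))$ be an extreme point of the convex set $I_{\mathcal{H}}(X,\mathcal{A})$ with commutative range, i.e. the operators $\mathcal{I}(A)(a)$, $A\in\mathcal{O}(X)$, $a\in\mathcal{A}$, pairwise commute. Then the POVM marginal $\mu_\mathcal{I}$, $\mu_\mathcal{I}(A)=\mathcal{I}(A)(1_\mathcal{A})$, is a spectral (projection-valued) measure.
   Context: A CP instrument is a map $\mathcal{I}$ from $\mathcal{O}(X)$ to the completely positive maps $\mathcal{A}\to\mathcal{B}(\mathcal{H})$ such that for all $a\in\mathcal{A}$, $h,k\in\mathcal{H}$, $A\mapsto\langle h,\mathcal{I}(A)(a)k\rangle$ is a countably additive complex measure. It is UCP if $\mathcal{I}(X)(1_\mathcal{A})=I_\mathcal{H}$; $I_{\mathcal{H}}(X,\mathcal{A})$ is the convex set of UCP instruments. *)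

theory Defs
  imports "HOL-Analysis.Analysis"
begin

definition hnorm :: "('h \<Rightarrow> 'h \<Rightarrow> complex) \<Rightarrow> 'h \<Rightarrow> real" where
  "hnorm ip x = sqrt (Re (ip x x))"

definition hilbert_space ::
  "(complex \<Rightarrow> 'h::ab_group_add \<Rightarrow> 'h) \<Rightarrow> ('h \<Rightarrow> 'h \<Rightarrow> complex) \<Rightarrow> bool" where
  "hilbert_space sc ip \<longleftrightarrow>
     vector_space sc \<and>
     (\<forall>x y z. ip x (y + z) = ip x y + ip x z) \<and>
     (\<forall>c x y. ip x (sc c y) = c * ip x y) \<and>
     (\<forall>x y. ip y x = cnj (ip x y)) \<and>
     (\<forall>x. 0 \<le> Re (ip x x)) \<and>
     (\<forall>x. ip x x = 0 \<longrightarrow> x = 0) \<and>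
     (\<forall>f :: nat \<Rightarrow> 'h. (\<forall>e>0. \<exists>N. \<forall>m\<ge>N. \<forall>n\<ge>N. hnorm ip (f m - f n) < e) \<longrightarrow>
        (\<exists>l. (\<lambda>n. hnorm ip (f n - l)) \<longlonglongrightarrow> 0))"

definition bounded_op ::
  "(complex \<Rightarrow> 'h::ab_group_add \<Rightarrow> 'h) \<Rightarrow> ('h \<Rightarrow> 'h \<Rightarrow> complex) \<Rightarrow> ('h \<Rightarrow> 'h) \<Rightarrow> bool" where
  "bounded_op sc ip T \<longleftrightarrow> Vector_Spaces.linear sc sc T \<and> (\<exists>K. \<forall>x. hnorm ip (T x) \<le> K * hnorm ip x)"

definition projection ::
  "(complex \<Rightarrow> 'h::ab_group_add \<Rightarrow> 'h) \<Rightarrow> ('h \<Rightarrow> 'h \<Rightarrow> complex) \<Rightarrow> ('h \<Rightarrow> 'h) \<Rightarrow> bool" where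
  "projection sc ip P \<longleftrightarrow> bounded_op sc ip P \<and> P \<circ> P = P \<and> (\<forall>x y. ip (P x) y = ip x (P y))"

definition unital_cstar_algebra ::
  "(complex \<Rightarrow> 'a::ring_1 \<Rightarrow> 'a) \<Rightarrow> ('a \<Rightarrow> 'a) \<Rightarrow> ('a \<Rightarrow> real) \<Rightarrow> bool" where
  "unital_cstar_algebra sa st nA \<longleftrightarrow>
     vector_space sa \<and>
     (\<forall>c x y. sa c (x * y) = sa c x * y \<and> sa c (x * y) = x * sa c y) \<and>
     (\<forall>x y. st (x + y) = st x + st y) \<and>
     (\<forall>c x. st (sa c x) = sa (cnj c) (st x)) \<and>
     (\<forall>x y. st (x * y) = st y * st x) \<and>
     (\<forall>x. st (st x) = x) \<and>
     (\<forall>x. nA x = 0 \<longleftrightarrow> x = 0) \<and>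
     (\<forall>x y. nA (x + y) \<le> nA x + nA y) \<and>
     (\<forall>c x. nA (sa c x) = cmod c * nA x) \<and>
     (\<forall>x y. nA (x * y) \<le> nA x * nA y) \<and>
     (\<forall>x. nA (st x * x) = (nA x)\<^sup>2) \<and>
     (\<forall>f :: nat \<Rightarrow> 'a. (\<forall>e>0. \<exists>N. \<forall>m\<ge>N. \<forall>n\<ge>N. nA (f m - f n) < e) \<longrightarrow>
        (\<exists>l. (\<lambda>n. nA (f n - l)) \<longlonglongrightarrow> 0))"

text \<open>Completely positive maps A -> B(H): complex-linear, valued in bounded operators, and
  for every n the amplification to M_n(A) -> M_n(B(H)) = B(H^n) is positive. Positive elements
  of M_n(A) are those of the form Y* Y (Y in M_n(A)); an operator T in B(H^n) is positive
  iff <h, T h> >= 0 for all h in H^n.\<close>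

definition completely_positive ::
  "(complex \<Rightarrow> 'a::ring_1 \<Rightarrow> 'a) \<Rightarrow> ('a \<Rightarrow> 'a) \<Rightarrow>
   (complex \<Rightarrow> 'h::ab_group_add \<Rightarrow> 'h) \<Rightarrow> ('h \<Rightarrow> 'h \<Rightarrow> complex) \<Rightarrow>
   ('a \<Rightarrow> 'h \<Rightarrow> 'h) \<Rightarrow> bool" where
  "completely_positive sa st sc ip \<phi> \<longleftrightarrow>
     (\<forall>a. bounded_op sc ip (\<phi> a)) \<and>
     (\<forall>a b h. \<phi> (a + b) h = \<phi> a h + \<phi> b h) \<and>
     (\<forall>c a h. \<phi> (sa c a) h = sc c (\<phi> a h)) \<and>
     (\<forall>(n::nat) (Y :: nat \<Rightarrow> nat \<Rightarrow> 'a) (h :: nat \<Rightarrow> 'h).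
        let s = (\<Sum>i<n. \<Sum>j<n. ip (h i) (\<phi> (\<Sum>k<n. st (Y k i) * Y k j) (h j)))
        in Im s = 0 \<and> 0 \<le> Re s)"

definition cp_instrument ::
  "'x measure \<Rightarrow> (complex \<Rightarrow> 'a::ring_1 \<Rightarrow> 'a) \<Rightarrow> ('a \<Rightarrow> 'a) \<Rightarrow>
   (complex \<Rightarrow> 'h::ab_group_add \<Rightarrow> 'h) \<Rightarrow> ('h \<Rightarrow> 'h \<Rightarrow> complex) \<Rightarrow>
   ('x set \<Rightarrow> 'a \<Rightarrow> 'h \<Rightarrow> 'h) \<Rightarrow> bool" where
  "cp_instrument M sa st sc ip I \<longleftrightarrow>
     (\<forall>A\<in>sets M. completely_positive sa st sc ip (I A)) \<and>
     (\<forall>a h k. \<forall>F :: nat \<Rightarrow> 'x set. range F \<subseteq> sets M \<longrightarrow> disjoint_family F \<longrightarrow>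
        (\<lambda>n. ip h (I (F n) a k)) sums ip h (I (\<Union>n. F n) a k))"

definition ucp_instrument ::
  "'x measure \<Rightarrow> (complex \<Rightarrow> 'a::ring_1 \<Rightarrow> 'a) \<Rightarrow> ('a \<Rightarrow> 'a) \<Rightarrow>
   (complex \<Rightarrow> 'h::ab_group_add \<Rightarrow> 'h) \<Rightarrow> ('h \<Rightarrow> 'h \<Rightarrow> complex) \<Rightarrow>
   ('x set \<Rightarrow> 'a \<Rightarrow> 'h \<Rightarrow> 'h) \<Rightarrow> bool" where
  "ucp_instrument M sa st sc ip I \<longleftrightarrow>
     cp_instrument M sa st sc ip I \<and> (\<forall>h. I (space M) 1 h = h)"

text \<open>Extreme points of the convex set of UCP instruments (instruments are compared on the
  measurable sets only, where they are defined).\<close>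

definition extreme_ucp_instrument ::
  "'x measure \<Rightarrow> (complex \<Rightarrow> 'a::ring_1 \<Rightarrow> 'a) \<Rightarrow> ('a \<Rightarrow> 'a) \<Rightarrow>
   (complex \<Rightarrow> 'h::ab_group_add \<Rightarrow> 'h) \<Rightarrow> ('h \<Rightarrow> 'h \<Rightarrow> complex) \<Rightarrow>
   ('x set \<Rightarrow> 'a \<Rightarrow> 'h \<Rightarrow> 'h) \<Rightarrow> bool" where
  "extreme_ucp_instrument M sa st sc ip I \<longleftrightarrow>
     ucp_instrument M sa st sc ip I \<and>
     (\<forall>I1 I2 (t::real).
        ucp_instrument M sa st sc ip I1 \<longrightarrow> ucp_instrument M sa st sc ip I2 \<longrightarrow> 0 < t \<longrightarrow> t < 1 \<longrightarrow>
        (\<forall>A\<in>sets M. \<forall>a h. I A a h = sc (complex_of_real t) (I1 A a h) + sc (complex_of_real (1 - t)) (I2 A a h)) \<longrightarrow>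
        (\<forall>A\<in>sets M. \<forall>a h. I1 A a h = I A a h \<and> I2 A a h = I A a h))"

end

theory Submission
  imports Defs
begin

lemma quad_nonneg_disc:
  fixes a b c :: real
  assumes q: "\<And>t. 0 \<le> a + 2*t*b + t^2*c" and a: "0 \<le> a" and c: "0 \<le> c"
  shows "b^2 \<le> a*c"
proof (cases "c = 0")
  case True
  have "b = 0"
  proof (rule ccontr)
    assume b: "b \<noteq> 0"
    have "0 \<le> a + 2*(-(a+1)/(2*b))*b + (-(a+1)/(2*b))^2*c" by (rule q)
    also have "\<dots> = -1" using b True by (simp add: field_simps)
    finally show False by simp
  qed
  then show ?thesis using a c by simp
next
  case False
  then have cp: "c > 0" using c by simp
  have "0 \<le> a + 2*(-b/c)*b + (-b/c)^2*c" by (rule q)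
  also have "\<dots> = a - b^2/c" using cp by (simp add: field_simps power2_eq_square)
  finally have "0 \<le> (a - b^2/c) * c" using cp by simp
  also have "\<dots> = a*c - b^2" using cp by (simp add: field_simps)
  finally show ?thesis by simp
qed

lemma logconv_bound:
  fixes q :: "nat \<Rightarrow> real" and C r :: real
  assumes nn: "\<And>k. 0 \<le> q k"
    and lc: "\<And>k. (q (Suc k))^2 \<le> q k * q (Suc (Suc k))"
    and gr: "\<And>k. q k \<le> C * r^k" and r: "0 < r"
  shows "q 1 \<le> r * q 0"
proof (rule ccontr)
  assume "\<not> q 1 \<le> r * q 0"
  then have big: "q 1 > r * q 0" by simp
  have q0: "q 0 > 0"
  proof (rule ccontr)
    assume "\<not> q 0 > 0"
    then have "q 0 = 0" using nn[of 0] by simp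
    then have "(q 1)^2 \<le> 0" using lc[of 0] by simp
    then have "q 1 = 0" by simp
    with big \<open>q 0 = 0\<close> show False by simp
  qed
  define \<rho> where "\<rho> = q 1 / q 0"
  have \<rho>r: "\<rho> > r" using big q0 by (simp add: \<rho>_def field_simps)
  have step: "q (Suc k) \<ge> \<rho> * q k \<and> q k > 0" for k
  proof (induction k)
    case 0
    then show ?case using q0 by (simp add: \<rho>_def)
  next
    case (Suc k)
    then have qk: "q k > 0" and s: "q (Suc k) \<ge> \<rho> * q k" by auto
    have \<rho>0: "\<rho> > 0" using \<rho>r r by simp
    have qs: "q (Suc k) > 0" using s qk \<rho>0 by (smt (verit) mult_pos_pos)
    have "q (Suc k) * (\<rho> * q k) \<le> q (Suc k) * q (Suc k)"
      using s qs by (simp add: mult_left_mono)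
    also have "\<dots> \<le> q k * q (Suc (Suc k))" using lc[of k] by (simp add: power2_eq_square)
    finally have "q k * (\<rho> * q (Suc k)) \<le> q k * q (Suc (Suc k))" by (simp add: ac_simps)
    then have "\<rho> * q (Suc k) \<le> q (Suc (Suc k))" using qk by simp
    then show ?case using qs by simp
  qed
  have low: "q k \<ge> \<rho>^k * q 0" for k
  proof (induction k)
    case 0 then show ?case by simp
  next
    case (Suc k)
    have \<rho>0: "\<rho> > 0" using \<rho>r r by simp
    have "\<rho>^(Suc k) * q 0 = \<rho> * (\<rho>^k * q 0)" by simp
    also have "\<dots> \<le> \<rho> * q k" using Suc \<rho>0 by (simp add: mult_left_mono)
    also have "\<dots> \<le> q (Suc k)" using step[of k] by simp
    finally show ?case .
  qed
  have "1 < \<rho> / r" using \<rho>r r by simp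
  then obtain k where k: "C / q 0 < (\<rho>/r)^k" using real_arch_pow by blast
  have "\<rho>^k * q 0 \<le> C * r^k" using low[of k] gr[of k] by simp
  then have "(\<rho>/r)^k * q 0 \<le> C" using r by (simp add: power_divide field_simps)
  then have "(\<rho>/r)^k \<le> C / q 0" using q0 by (simp add: field_simps)
  with k show False by simp
qed

locale hs =
  fixes sc :: "complex \<Rightarrow> 'h::ab_group_add \<Rightarrow> 'h" and ip :: "'h \<Rightarrow> 'h \<Rightarrow> complex"
  assumes H: "hilbert_space sc ip"
begin

lemmas Hc = H[unfolded hilbert_space_def]
lemma vs: "vector_space sc" using Hc by (elim conjE)
sublocale vector_space sc by (rule vs)

lemma ip_add_right: "ip x (y + z) = ip x y + ip x z" using Hc by (elim conjE) blast
lemma ip_scale_right: "ip x (sc c y) = c * ip x y" using Hc by (elim conjE) blast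
lemma ip_cnj: "ip y x = cnj (ip x y)" using Hc by (elim conjE) blast
lemma ip_pos: "0 \<le> Re (ip x x)" using Hc by (elim conjE) blast
lemma ip_zero_imp: "ip x x = 0 \<Longrightarrow> x = 0" using Hc by (elim conjE) blast

lemma ip_add_left: "ip (x + y) z = ip x z + ip y z"
  by (metis ip_cnj ip_add_right complex_cnj_add)
lemma ip_scale_left: "ip (sc c x) y = cnj c * ip x y"
  by (metis ip_cnj ip_scale_right complex_cnj_mult)
lemma ip_zero_right[simp]: "ip x 0 = 0"
  using ip_add_right[of x 0 0] by simp
lemma ip_zero_left[simp]: "ip 0 x = 0"
  using ip_add_left[of 0 0 x] by simp
lemma ip_minus_right: "ip x (- y) = - ip x y"
  using ip_add_right[of x y "-y"] minus_unique[of "ip x y" "ip x (-y)"] by simp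
lemma ip_diff_right: "ip x (y - z) = ip x y - ip x z"
  using ip_add_right[of x y "-z"] ip_minus_right[of x z] by simp
lemma ip_minus_left: "ip (- y) x = - ip y x"
  by (metis ip_cnj ip_minus_right complex_cnj_minus)
lemma ip_diff_left: "ip (y - z) x = ip y x - ip z x"
  using ip_add_left[of y "-z" x] ip_minus_left[of z x] by simp
lemma ip_sum_right: "ip x (\<Sum>i\<in>A. f i) = (\<Sum>i\<in>A. ip x (f i))"
  by (induction A rule: infinite_finite_induct) (auto simp: ip_add_right)

lemma ip_self_real: "Im (ip x x) = 0"
  using ip_cnj[of x x] by (metis cnj.simps(2) complex_cnj_cancel_iff complex_eq_iff neg_equal_zero)
lemma ip_self_eq: "ip x x = complex_of_real (Re (ip x x))"
  using ip_self_real by (simp add: complex_eq_iff)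

lemma ip_eq_0_iff: "ip x x = 0 \<longleftrightarrow> x = 0"
  using ip_zero_imp by auto

lemma ext_ip: "(\<And>g. ip g x = ip g y) \<Longrightarrow> x = y"
proof -
  assume "\<And>g. ip g x = ip g y"
  then have "ip (x - y) (x - y) = 0" by (simp add: ip_diff_right)
  then have "x - y = 0" by (rule ip_zero_imp)
  then show "x = y" by simp
qed

abbreviation hn where "hn \<equiv> hnorm ip"

lemma hn_nonneg: "0 \<le> hn x" using ip_pos[of x] by (simp add: hnorm_def)
lemma hn_sq: "(hn x)^2 = Re (ip x x)" using ip_pos[of x] by (simp add: hnorm_def)

lemma ip_expand_real:
  "ip (x + sc (complex_of_real t) y) (x + sc (complex_of_real t) y)
     = ip x x + complex_of_real t * (ip x y + ip y x) + complex_of_real (t^2) * ip y y"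
  by (simp add: ip_add_left ip_add_right ip_scale_left ip_scale_right algebra_simps power2_eq_square)

lemma cauchy_schwarz: "cmod (ip u v) \<le> hn u * hn v"
proof (cases "ip u v = 0")
  case True then show ?thesis by (simp add: hn_nonneg)
next
  case False
  define r where "r = cmod (ip u v)"
  have r0: "r > 0" using False by (simp add: r_def)
  define l where "l = ip u v / complex_of_real r"
  define u' where "u' = sc l u"
  have zz: "cnj (ip u v) * ip u v = complex_of_real (r^2)"
    using complex_norm_square[of "ip u v"] by (simp add: r_def mult.commute)
  have ll: "cnj l * l = 1"
  proof -
    have "cnj l * l = (cnj (ip u v) * ip u v) / complex_of_real (r^2)"
      by (simp add: l_def power2_eq_square)
    also have "\<dots> = 1" using zz r0 by simp
    finally show ?thesis .
  qed
  have e1: "ip u' v = complex_of_real r"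
  proof -
    have "ip u' v = (cnj (ip u v) * ip u v) / complex_of_real r"
      by (simp add: u'_def ip_scale_left l_def)
    also have "\<dots> = complex_of_real r" using zz r0 by (simp add: power2_eq_square)
    finally show ?thesis .
  qed
  have e2: "ip v u' = complex_of_real r" by (metis ip_cnj e1 complex_cnj_complex_of_real)
  have e3: "ip u' u' = ip u u"
    by (simp add: u'_def ip_scale_left ip_scale_right mult.assoc[symmetric]) (metis ll mult.commute)
  have "\<And>t. 0 \<le> Re (ip u u) + 2*t*r + t^2 * Re (ip v v)"
  proof -
    fix t
    have "0 \<le> Re (ip (u' + sc (complex_of_real t) v) (u' + sc (complex_of_real t) v))" by (rule ip_pos)
    also have "\<dots> = Re (ip u u) + 2*t*r + t^2 * Re (ip v v)"
      by (simp add: ip_expand_real e1 e2 e3)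
    finally show "0 \<le> Re (ip u u) + 2*t*r + t^2 * Re (ip v v)" .
  qed
  then have "r^2 \<le> Re (ip u u) * Re (ip v v)"
    by (rule quad_nonneg_disc) (auto simp: ip_pos)
  also have "\<dots> = (hn u * hn v)^2" by (simp add: hn_sq power_mult_distrib)
  finally have "r^2 \<le> (hn u * hn v)^2" .
  then show ?thesis unfolding r_def
    by (rule power2_le_imp_le) (simp add: hn_nonneg)
qed

lemma hn_triangle: "hn (x + y) \<le> hn x + hn y"
proof -
  have "Re (ip (x+y) (x+y)) = Re (ip x x) + Re (ip x y) + Re (ip y x) + Re (ip y y)"
    by (simp add: ip_add_left ip_add_right)
  also have "\<dots> \<le> Re (ip x x) + cmod (ip x y) + cmod (ip y x) + Re (ip y y)"
    using complex_Re_le_cmod[of "ip x y"] complex_Re_le_cmod[of "ip y x"] by linarith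
  also have "\<dots> \<le> (hn x)^2 + hn x * hn y + hn y * hn x + (hn y)^2"
    using cauchy_schwarz[of x y] cauchy_schwarz[of y x] by (simp add: hn_sq mult.commute)
  also have "\<dots> = (hn x + hn y)^2" by (simp add: power2_eq_square algebra_simps)
  finally have "(hn (x+y))^2 \<le> (hn x + hn y)^2" by (simp add: hn_sq)
  then show ?thesis by (rule power2_le_imp_le) (simp add: hn_nonneg add_nonneg_nonneg)
qed

lemma hn_scale: "hn (sc c x) = cmod c * hn x"
proof -
  have "ip (sc c x) (sc c x) = complex_of_real ((cmod c)^2) * ip x x"
  proof -
    have "ip (sc c x) (sc c x) = (cnj c * c) * ip x x"
      by (simp add: ip_scale_left ip_scale_right mult.assoc)
    also have "cnj c * c = complex_of_real ((cmod c)^2)"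
      using complex_norm_square[of c] by (simp add: mult.commute)
    finally show ?thesis by simp
  qed
  then have "Re (ip (sc c x) (sc c x)) = (cmod c)^2 * Re (ip x x)" by simp
  then show ?thesis by (simp add: hnorm_def real_sqrt_mult)
qed

end

context hs
begin

definition lin :: "('h \<Rightarrow> 'h) \<Rightarrow> bool" where
  "lin T \<longleftrightarrow> (\<forall>x y. T (x + y) = T x + T y) \<and> (\<forall>c x. T (sc c x) = sc c (T x))"

lemma linear_iff_lin: "Vector_Spaces.linear sc sc T \<longleftrightarrow> lin T"
  using vs by (simp add: Vector_Spaces.linear_iff lin_def)

lemma lin_add: "lin T \<Longrightarrow> T (x + y) = T x + T y" by (simp add: lin_def)
lemma lin_scale: "lin T \<Longrightarrow> T (sc c x) = sc c (T x)" by (simp add: lin_def)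
lemma lin_zero: "lin T \<Longrightarrow> T 0 = 0"
  using lin_add[of T 0 0] by simp
lemma lin_minus: "lin T \<Longrightarrow> T (- x) = - T x"
  using lin_add[of T x "-x"] lin_zero[of T] minus_unique[of "T x" "T (-x)"] by simp
lemma lin_diff: "lin T \<Longrightarrow> T (x - y) = T x - T y"
  using lin_add[of T x "-y"] lin_minus[of T y] by simp

lemma bop_lin: "bounded_op sc ip T \<Longrightarrow> lin T"
  by (simp add: bounded_op_def linear_iff_lin)

lemma bop_bound: "bounded_op sc ip T \<Longrightarrow> \<exists>K\<ge>0. \<forall>x. hn (T x) \<le> K * hn x"
proof -
  assume "bounded_op sc ip T"
  then obtain K where K: "\<forall>x. hn (T x) \<le> K * hn x" by (auto simp: bounded_op_def)
  have "\<forall>x. hn (T x) \<le> \<bar>K\<bar> * hn x"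
  proof
    fix x
    have "K * hn x \<le> \<bar>K\<bar> * hn x" using hn_nonneg[of x] by (simp add: mult_right_mono)
    then show "hn (T x) \<le> \<bar>K\<bar> * hn x" using K by (meson order_trans)
  qed
  then show ?thesis by (intro exI[of _ "\<bar>K\<bar>"]) simp
qed

lemma bopI: "lin T \<Longrightarrow> (\<And>x. hn (T x) \<le> K * hn x) \<Longrightarrow> bounded_op sc ip T"
  by (auto simp: bounded_op_def linear_iff_lin)

lemma bop_id: "bounded_op sc ip (\<lambda>x. x)"
  by (rule bopI[of _ 1]) (auto simp: lin_def)

lemma bop_comp:
  assumes "bounded_op sc ip T" "bounded_op sc ip S"
  shows "bounded_op sc ip (\<lambda>x. T (S x))"
proof -
  obtain K where K: "K \<ge> 0" "\<forall>x. hn (T x) \<le> K * hn x" using bop_bound[OF assms(1)] by auto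
  obtain L where L: "L \<ge> 0" "\<forall>x. hn (S x) \<le> L * hn x" using bop_bound[OF assms(2)] by auto
  have lT: "lin T" and lS: "lin S" using assms bop_lin by auto
  show ?thesis
  proof (rule bopI[of _ "K * L"])
    show "lin (\<lambda>x. T (S x))" using lT lS by (simp add: lin_def)
    fix x
    have "hn (T (S x)) \<le> K * hn (S x)" using K by simp
    also have "\<dots> \<le> K * (L * hn x)" using L K by (simp add: mult_left_mono)
    finally show "hn (T (S x)) \<le> K * L * hn x" by (simp add: mult.assoc)
  qed
qed

lemma bop_add:
  assumes "bounded_op sc ip T" "bounded_op sc ip S"
  shows "bounded_op sc ip (\<lambda>x. T x + S x)"
proof -
  obtain K where K: "K \<ge> 0" "\<forall>x. hn (T x) \<le> K * hn x" using bop_bound[OF assms(1)] by auto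
  obtain L where L: "L \<ge> 0" "\<forall>x. hn (S x) \<le> L * hn x" using bop_bound[OF assms(2)] by auto
  have lT: "lin T" and lS: "lin S" using assms bop_lin by auto
  show ?thesis
  proof (rule bopI[of _ "K + L"])
    show "lin (\<lambda>x. T x + S x)" using lT lS by (simp add: lin_def scale_right_distrib algebra_simps)
    fix x
    have "hn (T x + S x) \<le> hn (T x) + hn (S x)" by (rule hn_triangle)
    also have "\<dots> \<le> K * hn x + L * hn x" using K L by (simp add: add_mono)
    finally show "hn (T x + S x) \<le> (K + L) * hn x" by (simp add: algebra_simps)
  qed
qed

lemma bop_scale:
  assumes "bounded_op sc ip T"
  shows "bounded_op sc ip (\<lambda>x. sc c (T x))"
proof -
  obtain K where K: "K \<ge> 0" "\<forall>x. hn (T x) \<le> K * hn x" using bop_bound[OF assms(1)] by auto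
  have lT: "lin T" using assms bop_lin by auto
  show ?thesis
  proof (rule bopI[of _ "cmod c * K"])
    show "lin (\<lambda>x. sc c (T x))" using lT by (simp add: lin_def scale_right_distrib mult.commute)
    fix x
    have "hn (sc c (T x)) = cmod c * hn (T x)" by (rule hn_scale)
    also have "\<dots> \<le> cmod c * (K * hn x)" using K by (simp add: mult_left_mono)
    finally show "hn (sc c (T x)) \<le> cmod c * K * hn x" by (simp add: mult.assoc)
  qed
qed

definition bf :: "(nat \<Rightarrow> nat \<Rightarrow> 'h \<Rightarrow> 'h) \<Rightarrow> nat \<Rightarrow> (nat \<Rightarrow> 'h) \<Rightarrow> (nat \<Rightarrow> 'h) \<Rightarrow> complex" where
  "bf F n x y = (\<Sum>i<n. \<Sum>j<n. ip (x i) (F i j (y j)))"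

lemma bf_add_left: "bf F n (\<lambda>i. x i + y i) z = bf F n x z + bf F n y z"
  by (simp add: bf_def ip_add_left sum.distrib)

lemma bf_scale_left: "bf F n (\<lambda>i. sc c (x i)) y = cnj c * bf F n x y"
  by (simp add: bf_def ip_scale_left sum_distrib_left)

lemma bf_add_right: "(\<And>i j. lin (F i j)) \<Longrightarrow> bf F n x (\<lambda>i. y i + z i) = bf F n x y + bf F n x z"
  by (simp add: bf_def lin_add ip_add_right sum.distrib)

lemma bf_scale_right: "(\<And>i j. lin (F i j)) \<Longrightarrow> bf F n x (\<lambda>i. sc c (y i)) = c * bf F n x y"
  by (simp add: bf_def lin_scale ip_scale_right sum_distrib_left)

lemma bf_expand:
  assumes "\<And>i j. lin (F i j)"
  shows "bf F n (\<lambda>i. u i + sc (complex_of_real t) (v i)) (\<lambda>i. u i + sc (complex_of_real t) (v i))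
    = bf F n u u + complex_of_real t * (bf F n u v + bf F n v u) + complex_of_real (t^2) * bf F n v v"
  by (simp add: bf_add_left bf_add_right[OF assms] bf_scale_left bf_scale_right[OF assms]
      algebra_simps power2_eq_square)

end

context hs
begin

lemma pert:
  fixes F :: "nat \<Rightarrow> nat \<Rightarrow> 'h \<Rightarrow> 'h" and S :: "'h \<Rightarrow> 'h" and K :: real and L :: "nat \<Rightarrow> nat \<Rightarrow> real"
  assumes lF: "\<And>i j. lin (F i j)"
    and FL: "\<And>i j x. hn (F i j x) \<le> L i j * hn x"
    and SK: "\<And>x. hn (S x) \<le> K * hn x" and K: "K > 0"
    and sa: "\<And>x y. ip (S x) y = ip x (S y)"
    and cm: "\<And>i j x. F i j (S x) = S (F i j x)"
    and pos: "\<And>x. Im (bf F n x x) = 0 \<and> 0 \<le> Re (bf F n x x)"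
  shows "Im (bf F n x (\<lambda>i. S (x i))) = 0 \<and> \<bar>Re (bf F n x (\<lambda>i. S (x i)))\<bar> \<le> K * Re (bf F n x x)"
proof -
  have sym: "bf F n (\<lambda>i. S (u i)) w = bf F n u (\<lambda>i. S (w i))" for u w
    unfolding bf_def by (simp add: sa cm)
  have cs: "Im (bf F n u v) = 0 \<and> (Re (bf F n u v))^2 \<le> Re (bf F n u u) * Re (bf F n v v)"
    if e: "bf F n u v = bf F n v u" for u v
  proof
    have "Im (bf F n (\<lambda>i. u i + sc (complex_of_real 1) (v i)) (\<lambda>i. u i + sc (complex_of_real 1) (v i))) = 0"
      using pos by blast
    then have "Im (bf F n u u) + 2 * Im (bf F n u v) + Im (bf F n v v) = 0"
      unfolding bf_expand[OF lF] e by simp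
    then show "Im (bf F n u v) = 0" using pos[of u] pos[of v] by simp
    have "\<And>t. 0 \<le> Re (bf F n u u) + 2*t*Re (bf F n u v) + t^2 * Re (bf F n v v)"
    proof -
      fix t
      have "0 \<le> Re (bf F n (\<lambda>i. u i + sc (complex_of_real t) (v i)) (\<lambda>i. u i + sc (complex_of_real t) (v i)))"
        using pos by blast
      also have "\<dots> = Re (bf F n u u) + 2*t*Re (bf F n u v) + t^2 * Re (bf F n v v)"
        unfolding bf_expand[OF lF] e by simp
      finally show "0 \<le> Re (bf F n u u) + 2*t*Re (bf F n u v) + t^2 * Re (bf F n v v)" .
    qed
    then show "(Re (bf F n u v))^2 \<le> Re (bf F n u u) * Re (bf F n v v)"
      by (rule quad_nonneg_disc) (use pos in auto)
  qed
  define V where "V k = (\<lambda>i. (S^^k) (x i))" for k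
  define q where "q k = Re (bf F n (V k) (V k))" for k
  have VS: "V (Suc k) = (\<lambda>i. S (V k i))" for k by (simp add: V_def)
  have V0: "V 0 = x" by (simp add: V_def)
  have qnn: "0 \<le> q k" for k using pos by (simp add: q_def)
  have lc: "(q (Suc k))^2 \<le> q k * q (Suc (Suc k))" for k
  proof -
    have e1: "bf F n (V k) (V (Suc (Suc k))) = bf F n (V (Suc k)) (V (Suc k))"
      unfolding VS[of "Suc k"] sym[symmetric] VS[of k, symmetric] ..
    have e2: "bf F n (V (Suc (Suc k))) (V k) = bf F n (V (Suc k)) (V (Suc k))"
      unfolding VS[of "Suc k"] sym VS[of k, symmetric] ..
    show ?thesis using cs[of "V k" "V (Suc (Suc k))"] e1 e2 by (simp add: q_def)
  qed
  define C where "C = (\<Sum>i<n. \<Sum>j<n. hn (x i) * (\<bar>L i j\<bar> * hn (x j)))"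
  have hnV: "hn (V k i) \<le> K^k * hn (x i)" for k i
  proof (induction k)
    case 0 then show ?case by (simp add: V0)
  next
    case (Suc k)
    have "hn (V (Suc k) i) \<le> K * hn (V k i)" using SK by (simp add: VS)
    also have "\<dots> \<le> K * (K^k * hn (x i))" using Suc K by (simp add: mult_left_mono)
    finally show ?case by (simp add: mult.assoc)
  qed
  have FL': "hn (F i j z) \<le> \<bar>L i j\<bar> * hn z" for i j z
    using FL[of i j z] hn_nonneg[of z] by (smt (verit) mult_right_mono abs_ge_self)
  have gr: "q k \<le> C * (K^2)^k" for k
  proof -
    have "q k \<le> cmod (bf F n (V k) (V k))" unfolding q_def by (rule complex_Re_le_cmod)
    also have "\<dots> \<le> (\<Sum>i<n. \<Sum>j<n. cmod (ip (V k i) (F i j (V k j))))"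
      unfolding bf_def by (rule order_trans[OF norm_sum sum_mono[OF norm_sum]])
    also have "\<dots> \<le> (\<Sum>i<n. \<Sum>j<n. (K^2)^k * (hn (x i) * (\<bar>L i j\<bar> * hn (x j))))"
    proof (intro sum_mono)
      fix i j
      have "cmod (ip (V k i) (F i j (V k j))) \<le> hn (V k i) * hn (F i j (V k j))" by (rule cauchy_schwarz)
      also have "\<dots> \<le> hn (V k i) * (\<bar>L i j\<bar> * hn (V k j))"
        using FL' hn_nonneg by (simp add: mult_left_mono)
      also have "\<dots> \<le> (K^k * hn (x i)) * (\<bar>L i j\<bar> * (K^k * hn (x j)))"
        using hnV hn_nonneg K
        by (intro mult_mono mult_left_mono) (auto intro: mult_nonneg_nonneg)
      also have "\<dots> = (K^2)^k * (hn (x i) * (\<bar>L i j\<bar> * hn (x j)))"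
        by (simp add: power_mult_distrib[symmetric] power_mult[symmetric] power2_eq_square
            mult_2_right power_add ac_simps)
      finally show "cmod (ip (V k i) (F i j (V k j))) \<le> (K^2)^k * (hn (x i) * (\<bar>L i j\<bar> * hn (x j)))" .
    qed
    also have "\<dots> = C * (K^2)^k" by (simp add: C_def sum_distrib_left mult.commute)
    finally show ?thesis .
  qed
  have q1: "q 1 \<le> K^2 * q 0"
    by (rule logconv_bound[OF qnn lc gr]) (use K in simp)
  have V1: "V 1 = (\<lambda>i. S (x i))" by (simp add: V_def)
  have "bf F n x (V 1) = bf F n (V 1) x" unfolding V1 sym ..
  then have c: "Im (bf F n x (V 1)) = 0 \<and> (Re (bf F n x (V 1)))^2 \<le> q 0 * q 1"
    using cs[of x "V 1"] by (simp add: q_def V0)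
  have "\<bar>Re (bf F n x (V 1))\<bar>^2 \<le> q 0 * q 1" using c by simp
  also have "\<dots> \<le> q 0 * (K^2 * q 0)" using q1 qnn[of 0] by (simp add: mult_left_mono)
  also have "\<dots> = (K * q 0)^2" by (simp add: power2_eq_square)
  finally have "\<bar>Re (bf F n x (V 1))\<bar> \<le> K * q 0"
    by (rule power2_le_imp_le) (use K qnn in simp)
  then show ?thesis using c V1 by (simp add: q_def V0)
qed

end

lemma st_one:
  assumes "unital_cstar_algebra sa st nA"
  shows "st 1 = 1"
proof -
  have m: "\<And>x y. st (x * y) = st y * st x" and inv: "\<And>x. st (st x) = x"
    using assms unfolding unital_cstar_algebra_def by auto
  have "st (1 * st 1) = st (st 1) * st 1" by (rule m)
  then have "st (st 1) = st (st 1) * st 1" by simp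
  then show ?thesis using inv[of 1] by simp
qed

context hs
begin

lemma polar_selfadj:
  assumes lT: "lin T" and re: "\<And>z. Im (ip z (T z)) = 0"
  shows "ip (T x) y = ip x (T y)"
proof -
  have r1: "Im (ip x (T y) + ip y (T x)) = 0"
    using re[of "x + y"] re[of x] re[of y] lin_add[OF lT]
    by (simp add: ip_add_left ip_add_right)
  have r2: "Im (\<i> * ip x (T y) - \<i> * ip y (T x)) = 0"
    using re[of "x + sc \<i> y"] re[of x] re[of y] lin_add[OF lT] lin_scale[OF lT]
    by (simp add: ip_add_left ip_add_right ip_scale_left ip_scale_right algebra_simps)
  have "ip y (T x) = cnj (ip x (T y))"
    using r1 r2 by (simp add: complex_eq_iff)
  then show ?thesis by (metis ip_cnj complex_cnj_cnj)
qed

lemma instr_cp: "cp_instrument M sa st sc ip I \<Longrightarrow> A \<in> sets M \<Longrightarrow> completely_positive sa st sc ip (I A)"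
  by (simp add: cp_instrument_def)

lemma instr_sums: "cp_instrument M sa st sc ip I \<Longrightarrow> range F \<subseteq> sets M \<Longrightarrow> disjoint_family F \<Longrightarrow>
   (\<lambda>n. ip h (I (F n) a k)) sums ip h (I (\<Union>n. F n) a k)"
  by (simp add: cp_instrument_def)

lemma instr_empty:
  assumes cp: "cp_instrument M sa st sc ip I"
  shows "I {} a k = 0"
proof (rule ext_ip)
  fix g
  have "(\<lambda>n. ip g (I {} a k)) sums ip g (I {} a k)"
    using instr_sums[OF cp, of "\<lambda>n. {}" g a k] by (simp add: disjoint_family_on_def)
  then have "(\<lambda>n. ip g (I {} a k)) \<longlonglongrightarrow> 0" by (intro summable_LIMSEQ_zero sums_summable)
  then show "ip g (I {} a k) = ip g 0" by (simp add: LIMSEQ_const_iff)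
qed

lemma instr_add:
  assumes cp: "cp_instrument M sa st sc ip I" and A: "A \<in> sets M" and C: "C \<in> sets M"
    and d: "A \<inter> C = {}"
  shows "I (A \<union> C) a k = I A a k + I C a k"
proof (rule ext_ip)
  fix g
  have "(\<lambda>n. ip g (I (binaryset A C n) a k)) sums ip g (I (\<Union>n. binaryset A C n) a k)"
    by (rule instr_sums[OF cp])
       (use A C d in \<open>auto simp: range_binaryset_eq disjoint_family_on_def binaryset_def Int_commute\<close>)
  then have s1: "(\<lambda>n. ip g (I (binaryset A C n) a k)) sums ip g (I (A \<union> C) a k)"
    by (simp add: UN_binaryset_eq)
  have s2: "(\<lambda>n. ip g (I (binaryset A C n) a k)) sums (ip g (I A a k) + ip g (I C a k))"
    by (rule binaryset_sums[where f = "\<lambda>S. ip g (I S a k)"]) (simp add: instr_empty[OF cp])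
  show "ip g (I (A \<union> C) a k) = ip g (I A a k + I C a k)"
    using sums_unique2[OF s1 s2] by (simp add: ip_add_right)
qed

lemma instr_split:
  assumes cp: "cp_instrument M sa st sc ip I" and A: "A \<in> sets M" and E: "E \<in> sets M"
  shows "I A a k = I (A \<inter> E) a k + I (A - E) a k"
proof -
  have "A = (A \<inter> E) \<union> (A - E)" by auto
  then have "I A a k = I ((A \<inter> E) \<union> (A - E)) a k" by simp
  also have "\<dots> = I (A \<inter> E) a k + I (A - E) a k"
    by (rule instr_add[OF cp]) (use A E in auto)
  finally show ?thesis .
qed

end

context hs
begin

lemma cp_bop: "completely_positive sa st sc ip \<phi> \<Longrightarrow> bounded_op sc ip (\<phi> a)"
  by (simp add: completely_positive_def)
lemma cp_addA: "completely_positive sa st sc ip \<phi> \<Longrightarrow> \<phi> (a + b) h = \<phi> a h + \<phi> b h"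
  by (simp add: completely_positive_def)
lemma cp_scaleA: "completely_positive sa st sc ip \<phi> \<Longrightarrow> \<phi> (sa c a) h = sc c (\<phi> a h)"
  by (simp add: completely_positive_def)
lemma cp_pos: fixes n :: nat and h :: "nat \<Rightarrow> 'h" shows "completely_positive sa st sc ip \<phi> \<Longrightarrow>
  Im (\<Sum>i<n. \<Sum>j<n. ip (h i) (\<phi> (\<Sum>k<n. st (Y k i) * Y k j) (h j))) = 0 \<and>
  0 \<le> Re (\<Sum>i<n. \<Sum>j<n. ip (h i) (\<phi> (\<Sum>k<n. st (Y k i) * Y k j) (h j)))"
  unfolding completely_positive_def Let_def
  apply (elim conjE)
  apply (erule allE[of _ n])
  apply (erule allE[of _ Y])
  apply (erule allE[of _ h])
  apply assumption
  done

lemma cp_pert: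
  assumes cpA: "completely_positive sa st sc ip \<phi>"
    and SK: "\<And>x. hn (S x) \<le> K * hn x" and K: "K > 0" and sa: "\<And>x y. ip (S x) y = ip x (S y)"
    and cm: "\<And>a x. \<phi> a (S x) = S (\<phi> a x)" and e: "\<bar>e\<bar> * K \<le> 1"
  shows "Im (bf (\<lambda>i j. \<phi> (\<Sum>k<n. st (Y k i) * Y k j)) n h (\<lambda>j. h j + sc (complex_of_real e) (S (h j)))) = 0 \<and>
    0 \<le> Re (bf (\<lambda>i j. \<phi> (\<Sum>k<n. st (Y k i) * Y k j)) n h (\<lambda>j. h j + sc (complex_of_real e) (S (h j))))"
proof -
  define F where "F i j = \<phi> (\<Sum>k<n. st (Y k i) * Y k j)" for i j
  have lF: "lin (F i j)" for i j unfolding F_def by (rule bop_lin[OF cp_bop[OF cpA]])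
  define L where "L i j = (SOME L. \<forall>x. hn (F i j x) \<le> L * hn x)" for i j
  have FL: "hn (F i j x) \<le> L i j * hn x" for i j x
  proof -
    have "\<exists>L. \<forall>x. hn (F i j x) \<le> L * hn x"
      using bop_bound[OF cp_bop[OF cpA]] unfolding F_def by blast
    then have "\<forall>x. hn (F i j x) \<le> L i j * hn x" unfolding L_def by (rule someI_ex)
    then show ?thesis by blast
  qed
  have pos: "Im (bf F n x x) = 0 \<and> 0 \<le> Re (bf F n x x)" for x
    using cp_pos[OF cpA, where n=n and h=x and Y=Y] by (simp add: bf_def F_def)
  have cmF: "F i j (S x) = S (F i j x)" for i j x by (simp add: F_def cm)
  have p: "Im (bf F n h (\<lambda>i. S (h i))) = 0 \<and> \<bar>Re (bf F n h (\<lambda>i. S (h i)))\<bar> \<le> K * Re (bf F n h h)"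
    by (rule pert[OF lF FL SK K sa cmF pos])
  have eq: "bf F n h (\<lambda>j. h j + sc (complex_of_real e) (S (h j))) = bf F n h h + complex_of_real e * bf F n h (\<lambda>i. S (h i))"
    by (simp add: bf_add_right[OF lF] bf_scale_right[OF lF])
  define r where "r = Re (bf F n h h)"
  define pr where "pr = Re (bf F n h (\<lambda>i. S (h i)))"
  have r0: "0 \<le> r" using pos[of h] by (simp add: r_def)
  have "\<bar>e * pr\<bar> \<le> \<bar>e\<bar> * (K * r)" using p by (simp add: pr_def r_def abs_mult mult_left_mono)
  also have "\<dots> = (\<bar>e\<bar> * K) * r" by simp
  also have "\<dots> \<le> 1 * r" using e r0 by (rule mult_right_mono)
  finally have "0 \<le> r + e * pr" by simp
  then show ?thesis unfolding F_def[symmetric] eq using p pos[of h] by (simp add: r_def pr_def)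
qed

end

context hs
begin

lemma J_ucp:
  fixes M :: "'x measure" and I :: "'x set \<Rightarrow> 'a::ring_1 \<Rightarrow> 'h \<Rightarrow> 'h"
  assumes cp: "cp_instrument M sa st sc ip I" and unit: "\<forall>h. I (space M) 1 h = h"
   and comm: "\<forall>A\<in>sets M. \<forall>B\<in>sets M. \<forall>a b. I A a \<circ> I B b = I B b \<circ> I A a"
   and E: "E \<in> sets M"
   and K: "K > 0" and KP: "\<And>x. hn (I E 1 x) \<le> K * hn x" and KQ: "\<And>x. hn (I (space M - E) 1 x) \<le> K * hn x"
   and saP: "\<And>x y. ip (I E 1 x) y = ip x (I E 1 y)"
   and saQ: "\<And>x y. ip (I (space M - E) 1 x) y = ip x (I (space M - E) 1 y)"
   and e: "\<bar>e\<bar> * K \<le> 1"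
  shows "ucp_instrument M sa st sc ip (\<lambda>A a h. I (A \<inter> E) a (h + sc (complex_of_real e) (I (space M - E) 1 h))
            + I (A - E) a (h + sc (complex_of_real (-e)) (I E 1 h)))"
proof -
  define P where "P = I E 1"
  define Q where "Q = I (space M - E) 1"
  define J where "J = (\<lambda>A a h. I (A \<inter> E) a (h + sc (complex_of_real e) (Q h))
            + I (A - E) a (h + sc (complex_of_real (-e)) (P h)))"
  have Ec: "space M - E \<in> sets M" using E by auto
  have cpA: "completely_positive sa st sc ip (I A)" if "A \<in> sets M" for A using instr_cp[OF cp that] .
  have bP: "bounded_op sc ip P" unfolding P_def by (rule cp_bop[OF cpA[OF E]])
  have bQ: "bounded_op sc ip Q" unfolding Q_def by (rule cp_bop[OF cpA[OF Ec]])
  have lP: "lin P" and lQ: "lin Q" using bP bQ bop_lin by auto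
  have cmQ: "I A a (Q x) = Q (I A a x)" if "A \<in> sets M" for A a x
  proof -
    have "I A a \<circ> I (space M - E) 1 = I (space M - E) 1 \<circ> I A a" using comm that Ec by blast
    then show ?thesis unfolding Q_def by (metis comp_apply)
  qed
  have cmP: "I A a (P x) = P (I A a x)" if "A \<in> sets M" for A a x
  proof -
    have "I A a \<circ> I E 1 = I E 1 \<circ> I A a" using comm that E by blast
    then show ?thesis unfolding P_def by (metis comp_apply)
  qed
  have e': "\<bar>-e\<bar> * K \<le> 1" using e by simp
  have CPJ: "completely_positive sa st sc ip (J A)" if A: "A \<in> sets M" for A
  proof -
    have A1: "A \<inter> E \<in> sets M" and A2: "A - E \<in> sets M" using A E by auto
    note c1 = cpA[OF A1] and c2 = cpA[OF A2]
    have bnd: "bounded_op sc ip (J A a)" for a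
    proof -
      have b1: "bounded_op sc ip (\<lambda>h. I (A \<inter> E) a (h + sc (complex_of_real e) (Q h)))"
        by (rule bop_comp[OF cp_bop[OF c1] bop_add[OF bop_id bop_scale[OF bQ]]])
      have b2: "bounded_op sc ip (\<lambda>h. I (A - E) a (h + sc (complex_of_real (-e)) (P h)))"
        by (rule bop_comp[OF cp_bop[OF c2] bop_add[OF bop_id bop_scale[OF bP]]])
      show ?thesis unfolding J_def by (rule bop_add[OF b1 b2])
    qed
    have ad: "J A (a + b) h = J A a h + J A b h" for a b h
      unfolding J_def by (simp add: cp_addA[OF c1] cp_addA[OF c2] algebra_simps)
    have scl: "J A (sa c a) h = sc c (J A a h)" for c a h
      unfolding J_def by (simp add: cp_scaleA[OF c1] cp_scaleA[OF c2] scale_right_distrib)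
    have ps: "Im (\<Sum>i<n. \<Sum>j<n. ip (h i) (J A (\<Sum>k<n. st (Y k i) * Y k j) (h j))) = 0 \<and>
        0 \<le> Re (\<Sum>i<n. \<Sum>j<n. ip (h i) (J A (\<Sum>k<n. st (Y k i) * Y k j) (h j)))"
      for n :: nat and Y :: "nat \<Rightarrow> nat \<Rightarrow> 'a" and h :: "nat \<Rightarrow> 'h"
    proof -
      have key: "(\<Sum>i<n. \<Sum>j<n. ip (h i) (J A (\<Sum>k<n. st (Y k i) * Y k j) (h j)))
         = bf (\<lambda>i j. I (A \<inter> E) (\<Sum>k<n. st (Y k i) * Y k j)) n h (\<lambda>j. h j + sc (complex_of_real e) (Q (h j)))
         + bf (\<lambda>i j. I (A - E) (\<Sum>k<n. st (Y k i) * Y k j)) n h (\<lambda>j. h j + sc (complex_of_real (-e)) (P (h j)))"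
        by (simp add: J_def bf_def ip_add_right sum.distrib)
      have KQ': "hn (Q x) \<le> K * hn x" for x unfolding Q_def by (rule KQ)
      have KP': "hn (P x) \<le> K * hn x" for x unfolding P_def by (rule KP)
      have saQ': "ip (Q x) y = ip x (Q y)" for x y unfolding Q_def by (rule saQ)
      have saP': "ip (P x) y = ip x (P y)" for x y unfolding P_def by (rule saP)
      have p1: "Im (bf (\<lambda>i j. I (A \<inter> E) (\<Sum>k<n. st (Y k i) * Y k j)) n h (\<lambda>j. h j + sc (complex_of_real e) (Q (h j)))) = 0 \<and>
          0 \<le> Re (bf (\<lambda>i j. I (A \<inter> E) (\<Sum>k<n. st (Y k i) * Y k j)) n h (\<lambda>j. h j + sc (complex_of_real e) (Q (h j))))"
        by (rule cp_pert[OF c1 KQ' K saQ' cmQ[OF A1] e])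
      have p2: "Im (bf (\<lambda>i j. I (A - E) (\<Sum>k<n. st (Y k i) * Y k j)) n h (\<lambda>j. h j + sc (complex_of_real (-e)) (P (h j)))) = 0 \<and>
          0 \<le> Re (bf (\<lambda>i j. I (A - E) (\<Sum>k<n. st (Y k i) * Y k j)) n h (\<lambda>j. h j + sc (complex_of_real (-e)) (P (h j))))"
        by (rule cp_pert[OF c2 KP' K saP' cmP[OF A2] e'])
      show ?thesis unfolding key using p1 p2 by simp
    qed
    show ?thesis unfolding completely_positive_def Let_def using bnd ad scl ps by blast
  qed
  have sums: "(\<lambda>n. ip h (J (F n) a k)) sums ip h (J (\<Union>n. F n) a k)"
    if F: "range F \<subseteq> sets M" and d: "disjoint_family F" for a h k and F :: "nat \<Rightarrow> 'x set"
  proof -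
    define k1 where "k1 = k + sc (complex_of_real e) (Q k)"
    define k2 where "k2 = k + sc (complex_of_real (-e)) (P k)"
    have s1: "(\<lambda>n. ip h (I ((\<lambda>n. F n \<inter> E) n) a k1)) sums ip h (I (\<Union>n. (\<lambda>n. F n \<inter> E) n) a k1)"
      by (rule instr_sums[OF cp]) (use F d E in \<open>auto simp: disjoint_family_on_def\<close>)
    have s2: "(\<lambda>n. ip h (I ((\<lambda>n. F n - E) n) a k2)) sums ip h (I (\<Union>n. (\<lambda>n. F n - E) n) a k2)"
      by (rule instr_sums[OF cp]) (use F d E in \<open>auto simp: disjoint_family_on_def\<close>)
    have u1: "(\<Union>n. F n \<inter> E) = (\<Union>n. F n) \<inter> E" by auto
    have u2: "(\<Union>n. F n - E) = (\<Union>n. F n) - E" by auto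
    have "(\<lambda>n. ip h (I (F n \<inter> E) a k1) + ip h (I (F n - E) a k2)) sums
        (ip h (I ((\<Union>n. F n) \<inter> E) a k1) + ip h (I ((\<Union>n. F n) - E) a k2))"
      using sums_add[OF s1 s2] unfolding u1 u2 by simp
    then show ?thesis unfolding J_def k1_def k2_def by (simp add: ip_add_right)
  qed
  have cpJ: "cp_instrument M sa st sc ip J"
    unfolding cp_instrument_def using CPJ sums by blast
  have sE: "space M \<inter> E = E" using sets.sets_into_space[OF E] by auto
  have PQ: "P h + Q h = h" for h
    using instr_split[OF cp sets.top E, of 1 h] unit sE by (simp add: P_def Q_def)
  have QP: "Q (P h) = P (Q h)" for h using cmP[OF Ec, of 1 h] by (simp add: Q_def)
  have uJ: "J (space M) 1 h = h" for h
  proof -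
    have "J (space M) 1 h = P (h + sc (complex_of_real e) (Q h)) + Q (h + sc (complex_of_real (-e)) (P h))"
      unfolding J_def sE by (simp add: P_def Q_def)
    also have "\<dots> = (P h + Q h) + (sc (complex_of_real e) (P (Q h)) - sc (complex_of_real e) (P (Q h)))"
      by (simp add: lin_add[OF lP] lin_add[OF lQ] lin_scale[OF lP] lin_scale[OF lQ] lin_diff[OF lP] lin_diff[OF lQ] QP algebra_simps)
    also have "\<dots> = h" using PQ by simp
    finally show ?thesis .
  qed
  show ?thesis unfolding ucp_instrument_def J_def[symmetric] P_def[symmetric] Q_def[symmetric]
    using cpJ uJ by blast
qed

end

theorem theorem4p1:
  fixes M :: "'x measure"
    and sa :: "complex \<Rightarrow> 'a::ring_1 \<Rightarrow> 'a" and st :: "'a \<Rightarrow> 'a" and nA :: "'a \<Rightarrow> real"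
    and sc :: "complex \<Rightarrow> 'h::ab_group_add \<Rightarrow> 'h" and ip :: "'h \<Rightarrow> 'h \<Rightarrow> complex"
    and I :: "'x set \<Rightarrow> 'a \<Rightarrow> 'h \<Rightarrow> 'h"
  assumes "unital_cstar_algebra sa st nA"
    and "hilbert_space sc ip"
    and "extreme_ucp_instrument M sa st sc ip I"
    and "\<forall>A\<in>sets M. \<forall>B\<in>sets M. \<forall>a b. I A a \<circ> I B b = I B b \<circ> I A a"
  shows "\<forall>A\<in>sets M. projection sc ip (I A 1)"
proof
  fix E assume E: "E \<in> sets M"
  interpret hs sc ip by (rule hs.intro) (rule assms(2))
  have ucp: "ucp_instrument M sa st sc ip I"
    using assms(3) unfolding extreme_ucp_instrument_def by (rule conjunct1)
  have ext: "\<forall>I1 I2 (t::real).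
        ucp_instrument M sa st sc ip I1 \<longrightarrow> ucp_instrument M sa st sc ip I2 \<longrightarrow> 0 < t \<longrightarrow> t < 1 \<longrightarrow>
        (\<forall>A\<in>sets M. \<forall>a h. I A a h = sc (complex_of_real t) (I1 A a h) + sc (complex_of_real (1 - t)) (I2 A a h)) \<longrightarrow>
        (\<forall>A\<in>sets M. \<forall>a h. I1 A a h = I A a h \<and> I2 A a h = I A a h)"
    using assms(3) unfolding extreme_ucp_instrument_def by (rule conjunct2)
  have cp: "cp_instrument M sa st sc ip I" and unit: "\<forall>h. I (space M) 1 h = h"
    using ucp unfolding ucp_instrument_def by auto
  note comm = assms(4)
  have Ec: "space M - E \<in> sets M" using E by auto
  have cpA: "completely_positive sa st sc ip (I A)" if "A \<in> sets M" for A using instr_cp[OF cp that] .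
  have selfadj: "ip (I A 1 x) y = ip x (I A 1 y)" if A: "A \<in> sets M" for A x y
  proof (rule polar_selfadj[OF bop_lin[OF cp_bop[OF cpA[OF A]]]])
    fix z
    show "Im (ip z (I A 1 z)) = 0"
      using conjunct1[OF cp_pos[OF cpA[OF A], where n=1 and h="\<lambda>_. z" and Y="\<lambda>_ _. 1"]]
      by (simp add: st_one[OF assms(1)])
  qed
  obtain KP where KP: "KP \<ge> 0" "\<And>x. hn (I E 1 x) \<le> KP * hn x"
    using bop_bound[OF cp_bop[OF cpA[OF E]]] by auto
  obtain KQ where KQ: "KQ \<ge> 0" "\<And>x. hn (I (space M - E) 1 x) \<le> KQ * hn x"
    using bop_bound[OF cp_bop[OF cpA[OF Ec]]] by auto
  define K where "K = KP + KQ + 1"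
  have K: "K > 0" using KP KQ by (simp add: K_def)
  have KP': "hn (I E 1 x) \<le> K * hn x" for x
    using KP(2)[of x] KQ(1) hn_nonneg[of x] unfolding K_def by (smt (verit) mult_right_mono)
  have KQ': "hn (I (space M - E) 1 x) \<le> K * hn x" for x
    using KQ(2)[of x] KP(1) hn_nonneg[of x] unfolding K_def by (smt (verit) mult_right_mono)
  define \<epsilon> where "\<epsilon> = 1 / K"
  have \<epsilon>0: "\<epsilon> \<noteq> 0" using K by (simp add: \<epsilon>_def)
  have e1: "\<bar>\<epsilon>\<bar> * K \<le> 1" and e2: "\<bar>-\<epsilon>\<bar> * K \<le> 1" using K by (simp_all add: \<epsilon>_def)
  define J where "J = (\<lambda>e A a h. I (A \<inter> E) a (h + sc (complex_of_real e) (I (space M - E) 1 h))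
            + I (A - E) a (h + sc (complex_of_real (-e)) (I E 1 h)))"
  have u1: "ucp_instrument M sa st sc ip (J \<epsilon>)"
    unfolding J_def by (rule J_ucp[OF cp unit comm E K KP' KQ' selfadj[OF E] selfadj[OF Ec] e1])
  have u2: "ucp_instrument M sa st sc ip (J (-\<epsilon>))"
    unfolding J_def by (rule J_ucp[OF cp unit comm E K KP' KQ' selfadj[OF E] selfadj[OF Ec] e2])
  have dec: "\<forall>A\<in>sets M. \<forall>a h. I A a h = sc (complex_of_real (1/2)) (J \<epsilon> A a h) + sc (complex_of_real (1 - 1/2)) (J (-\<epsilon>) A a h)"
  proof (intro ballI allI)
    fix A a h assume A: "A \<in> sets M"
    have A1: "A \<inter> E \<in> sets M" and A2: "A - E \<in> sets M" using A E by auto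
    have l1: "lin (I (A \<inter> E) a)" and l2: "lin (I (A - E) a)"
      using bop_lin[OF cp_bop[OF cpA[OF A1]]] bop_lin[OF cp_bop[OF cpA[OF A2]]] by auto
    show "I A a h = sc (complex_of_real (1/2)) (J \<epsilon> A a h) + sc (complex_of_real (1 - 1/2)) (J (-\<epsilon>) A a h)"
    proof (rule ext_ip)
      fix g
      show "ip g (I A a h) = ip g (sc (complex_of_real (1/2)) (J \<epsilon> A a h) + sc (complex_of_real (1 - 1/2)) (J (-\<epsilon>) A a h))"
        unfolding instr_split[OF cp A E, of a h] J_def
        by (simp add: lin_add[OF l1] lin_add[OF l2] lin_scale[OF l1] lin_scale[OF l2]
            lin_diff[OF l1] lin_diff[OF l2] ip_diff_right ip_add_right ip_scale_right algebra_simps)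
    qed
  qed
  have "\<forall>A\<in>sets M. \<forall>a h. J \<epsilon> A a h = I A a h \<and> J (-\<epsilon>) A a h = I A a h"
  proof -
    have h1: "0 < (1/2::real)" and h2: "1/2 < (1::real)" by simp_all
    note x = spec[OF spec[OF spec[OF ext, of "J \<epsilon>"], of "J (-\<epsilon>)"], of "1/2"]
    show ?thesis by (rule mp[OF mp[OF mp[OF mp[OF mp[OF x u1] u2] h1] h2] dec])
  qed
  then have fix1: "J \<epsilon> E 1 h = I E 1 h" for h using E by blast
  have lP: "lin (I E 1)" using bop_lin[OF cp_bop[OF cpA[OF E]]] .
  have sE: "space M \<inter> E = E" using sets.sets_into_space[OF E] by auto
  have PQ: "I E 1 h + I (space M - E) 1 h = h" for h
    using instr_split[OF cp sets.top E, of 1 h] unit sE by simp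
  have idem: "I E 1 (I E 1 h) = I E 1 h" for h
  proof -
    have "I E 1 (h + sc (complex_of_real \<epsilon>) (I (space M - E) 1 h)) = I E 1 h"
      using fix1[of h] unfolding J_def by (simp add: instr_empty[OF cp])
    then have "sc (complex_of_real \<epsilon>) (I E 1 (I (space M - E) 1 h)) = 0"
      by (simp add: lin_add[OF lP] lin_scale[OF lP])
    then have "I E 1 (I (space M - E) 1 h) = 0" using \<epsilon>0 by simp
    moreover have "I (space M - E) 1 h = h - I E 1 h" using PQ[of h] by (metis add_diff_cancel_left')
    ultimately show ?thesis by (simp add: lin_diff[OF lP])
  qed
  show "projection sc ip (I E 1)"
    unfolding projection_def
    using cp_bop[OF cpA[OF E]] idem selfadj[OF E] by (auto simp: fun_eq_iff)
qed

end
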